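(* Let $\alpha,\beta$ be two different complex numbers of modulus $1$. Then there exists a polynomial $f_{\alpha,\beta}$ with complex coefficients such that $f_{\alpha,\beta}(\alpha)=0$ and $f_{\alpha,\beta}(\beta)=|f_{\alpha,\beta}|_{1}$.
   Context: For a polynomial $f(z)=a_nz^n+\dots+a_1z+a_0$ with complex coefficients, $|f|_1:=|a_0|+|a_1|+\dots+|a_n|$. *)

theory Defs
  imports "HOL-Analysis.Analysis" "HOL-Computational_Algebra.Polynomial"
begin

definition l1_norm :: "complex poly \<Rightarrow> real" where
  "l1_norm f = (\<Sum>i\<le>degree f. norm (coeff f i))"

end

theory Submission imports Defs begin
lemma cosk:
  fixes z :: complex assumes "norm z = 1" "z \<noteq> 1"
  shows "\<exists>k::nat. k \<ge> 1 \<and> Re (z ^ k) \<le> 0"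
proof -
  define t where "t = Arg z"
  have z: "z = cis t" using assms rcis_cmod_Arg[of z] unfolding t_def by (simp add: rcis_def)
  have tb: "-pi < t" "t \<le> pi" using mpi_less_Arg[of z] Arg_le_pi[of z] t_def by auto
  have t0: "t \<noteq> 0" using assms z by auto
  define a where "a = \<bar>t\<bar>"
  have a: "0 < a" "a \<le> pi" using tb t0 a_def by auto
  define k where "k = nat (ceiling (pi / (2*a)))"
  have k1: "real k \<ge> pi/(2*a)" unfolding k_def by linarith
  have pp: "pi/(2*a) > 0" using a by simp
  have k2: "real k < pi/(2*a) + 1" unfolding k_def using pp
    by (simp add: of_nat_nat[of "ceiling _"]) linarith
  have kge: "k \<ge> 1" using k1 pp by (metis of_nat_0 less_one not_less order.strict_trans2)
  have l: "pi/2 \<le> real k * a" using k1 a by (simp add: field_simps)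
  have u: "real k * a < pi/2 + a" using k2 a by (simp add: field_simps)
  have "Re (z^k) = cos (real k * t)" using z by (simp add: cos_n_Re_cis_pow_n)
  also have "\<dots> = cos (real k * a)" unfolding a_def
    by (cases "t \<ge> 0") (auto simp: abs_if)
  also have "\<dots> = - sin (real k * a - pi/2)" by (simp add: sin_diff)
  also have "\<dots> \<le> 0" using l u a by (intro neg_le_0_iff_le[THEN iffD2] sin_ge_zero) auto
  finally show ?thesis using kge by blast
qed

lemma l1_eq:
  fixes f :: "complex poly"
  assumes "\<And>i. coeff f i * b ^ i = complex_of_real (norm (coeff f i))"
  shows "poly f b = complex_of_real (l1_norm f)"
  unfolding poly_altdef l1_norm_def using assms by simp

theorem mainTheorem19:
  fixes \<alpha> \<beta> :: complex
  assumes "norm \<alpha> = 1" and "norm \<beta> = 1" and "\<alpha> \<noteq> \<beta>"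
  shows "\<exists>f :: complex poly. f \<noteq> 0 \<and> poly f \<alpha> = 0 \<and> poly f \<beta> = complex_of_real (l1_norm f)"
proof -
  have bb: "cnj \<beta> * \<beta> = 1" using assms(2)
    by (metis complex_norm_square mult.commute of_real_1 power_one)
  define z where "z = \<alpha> * cnj \<beta>"
  have zn: "norm z = 1" using assms by (simp add: z_def norm_mult)
  have z1: "z \<noteq> 1"
  proof
    assume "z = 1"
    hence "\<alpha> * cnj \<beta> * \<beta> = \<beta>" by (simp add: z_def)
    hence "\<alpha> = \<beta>" using bb by (simp add: mult.assoc)
    thus False using assms(3) by simp
  qed
  obtain k :: nat where k: "k \<ge> 1" "Re (z ^ k) \<le> 0" using cosk[OF zn z1] by blast
  define w where "w = z ^ k"
  have wn: "w * cnj w = 1" using zn unfolding w_def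
    by (metis complex_norm_square norm_power power_one of_real_1)
  define a where "a = - 2 * Re w"
  have a0: "a \<ge> 0" using k by (simp add: a_def w_def)
  define f where "f = 1 + monom (complex_of_real a * cnj \<beta> ^ k) k + monom (cnj \<beta> ^ (2*k)) (2*k)"
  have pf: "poly f x = 1 + complex_of_real a * cnj \<beta> ^ k * x ^ k + cnj \<beta> ^ (2*k) * x ^ (2*k)" for x
    by (simp add: f_def poly_monom)
  have "poly f \<alpha> = 1 + complex_of_real a * w + w^2"
    unfolding pf w_def z_def by (simp add: power_mult_distrib power_mult mult_ac power2_eq_square)
  also have "\<dots> = 0"
  proof -
    have "complex_of_real (Re w) = (w + cnj w) / 2" by (simp add: complex_add_cnj)
    hence "complex_of_real a = - (w + cnj w)" by (simp add: a_def algebra_simps)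
    hence e: "complex_of_real a = - w - cnj w" by simp
    have "1 + complex_of_real a * w + w^2 = 1 - w * cnj w" unfolding e power2_eq_square
      by (simp add: ring_distribs mult.commute)
    thus ?thesis using wn by simp
  qed
  finally have fa: "poly f \<alpha> = 0" .
  have cf: "coeff f i = (if i = 0 then 1 else 0) + (if i = k then complex_of_real a * cnj \<beta> ^ k else 0)
       + (if i = 2*k then cnj \<beta> ^ (2*k) else 0)" for i
    by (simp add: f_def coeff_monom)
  have nb: "norm (cnj \<beta>) = 1" using assms(2) by simp
  have fb: "poly f \<beta> = complex_of_real (l1_norm f)"
  proof (rule l1_eq)
    fix i
    show "coeff f i * \<beta> ^ i = complex_of_real (norm (coeff f i))"
    proof -
      consider "i = 0" | "i = k" | "i = 2*k" | "i \<noteq> 0 \<and> i \<noteq> k \<and> i \<noteq> 2*k" by blast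
      thus ?thesis
      proof cases
        case 1 thus ?thesis using k by (simp add: cf)
      next
        case 2
        have "cnj \<beta> ^ k * \<beta> ^ k = 1" using bb by (metis power_mult_distrib power_one)
        thus ?thesis using 2 k a0 nb by (simp add: cf norm_mult norm_power mult.assoc)
      next
        case 3
        have "cnj \<beta> ^ (2*k) * \<beta> ^ (2*k) = 1" using bb by (metis power_mult_distrib power_one)
        thus ?thesis using 3 k nb by (simp add: cf norm_power)
      next
        case 4 thus ?thesis by (simp add: cf)
      qed
    qed
  qed
  have "coeff f (2*k) \<noteq> 0" using k bb by (auto simp: cf)
  hence "f \<noteq> 0" by auto
  thus ?thesis using fa fb by blast
qed
end
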